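(* At any time $t$, after the incremental maintenance of the random RR sets under the LT model described in the context, $n\mathcal{F_R}(S)$ is an unbiased estimator of $I(S)$ for any seed set $S$.
   Context: Setting: a directed network $G=\langle V,E,w\rangle$ with $n=|V|$ nodes under the Linear Threshold (LT) model. Each edge $(u,v)$ has weight $w_{uv}\ge 0$, each node $v$ has a self-weight $w_v$ (treated as $w_{vv}$, i.e. $v$ is regarded as an in-neighbor of itself), and $W_v=w_v+\sum_{u\in N^{in}(v)}w_{uv}$ is the total weight of $v$; the influence probability of $(u,v)$ is $p_{uv}=w_{uv}/W_v$. In the equivalent live-edge process each node $v$ picks at most one incoming edge $(u,v)$ as live with probability $p_{uv}$ (picking none, i.e. picking itself, with probability $w_v/W_v$). $I(S)$ is the influence spread of seed set $S$ (expected number of nodes reachable from $S$ via live edges). A random RR (Reversely Reachable) set is obtained by picking a node uniformly at random and collecting the nodes that reach it via live edges; under LT it is a simple path, and for each node on it the chosen previous node is stored. Given a collection $\mathcal{R}$ of $M$ RR sets, $\mathcal{F_R}(S)=\mathcal{D}(S)/M$, where $\mathcal{D}(S)$ is the number of RR sets containing at least one node of $S$. The network is dynamic: a stream of weight updates $(u,v,+/-,\Delta,t)$ changes $w_{uv}$ (or $w_v$ if $u=v$) by $\pm\Delta$ at time $t$; $w^t_{uv}$ and $W^t_v$ denote values at time $t$. Incremental maintenance after updating the graph: (1) for a weight increase $(u,v,+,\Delta,t)$, every RR set passing $v$ is, with probability $\Delta/W_v^t$, rerouted from $v$: the previous node of $v$ is set to $u$ and reverse propagation continues until no new node is reached; (2)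 for a weight decrease $(u,v,-,\Delta,t)$, every RR set passing $v$ whose previous node of $v$ is $u$ is, with probability $\Delta/w_{uv}^{t-1}$, rerouted from $v$: a new previous node $u'$ among $v$'s in-neighbors (including $v$ itself) is chosen with probability $w_{u'v}^t/W_v^t$, and reverse propagation continues until no new node is reached. At time 0 the network has no edges. *)

theory Defs
  imports "HOL-Probability.Probability"
begin

(* Weights: w u v is the weight of edge (u,v) for u \<noteq> v; w v v is the self-weight w_v. *)
type_synonym 'v weights = "'v \<Rightarrow> 'v \<Rightarrow> real"

(* An update (u, v, inc, \<Delta>): inc = True means '+', inc = False means '-'. *)
type_synonym 'v update = "'v \<times> 'v \<times> bool \<times> real"

definition lt_W :: "('v::finite) weights \<Rightarrow> 'v \<Rightarrow> real" where
  "lt_W w v = (\<Sum>u\<in>UNIV. w u v)"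

(* the random choice of v's previous node in the live-edge process:
   u with probability w u v / W_v (u = v means: no live incoming edge).
   Convention: if W_v = 0, v picks itself. *)
definition lt_choice :: "('v::finite) weights \<Rightarrow> 'v \<Rightarrow> 'v pmf" where
  "lt_choice w v = (if lt_W w v > 0 then embed_pmf (\<lambda>u. w u v / lt_W w v) else return_pmf v)"

definition live_edge_pmf :: "('v::finite) weights \<Rightarrow> ('v \<Rightarrow> 'v) pmf" where
  "live_edge_pmf w = Pi_pmf UNIV undefined (\<lambda>v. lt_choice w v)"

definition activated :: "('v \<Rightarrow> 'v) \<Rightarrow> 'v set \<Rightarrow> 'v set" where
  "activated prev S = {x. \<exists>k. (prev ^^ k) x \<in> S}"

definition influence :: "('v::finite) weights \<Rightarrow> 'v set \<Rightarrow> real" where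
  "influence w S = measure_pmf.expectation (live_edge_pmf w) (\<lambda>prev. real (card (activated prev S)))"

(* An RR set state (xs, l): xs = [x0, ..., xk] is the simple path in reverse-propagation
   order (x0 the root); the stored previous node of x_i is x_(i+1) for i < k, and l for x_k
   (l = x_k: picked itself; otherwise l is an already visited node). *)
type_synonym 'v rr_state = "'v list \<times> 'v"

(* Reverse propagation: pre are the visited nodes, x is the current node.
   The nat argument is fuel; CARD('v) always suffices. *)
fun rr_walk :: "nat \<Rightarrow> ('v::finite) weights \<Rightarrow> 'v list \<Rightarrow> 'v \<Rightarrow> 'v rr_state pmf" where
  "rr_walk 0 w pre x = return_pmf (pre @ [x], x)"
| "rr_walk (Suc k) w pre x =
     bind_pmf (lt_choice w x) (\<lambda>p.
       if p \<in> set (pre @ [x]) then return_pmf (pre @ [x], p)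
       else rr_walk k w (pre @ [x]) p)"

definition rr_sample :: "('v::finite) weights \<Rightarrow> 'v rr_state pmf" where
  "rr_sample w = bind_pmf (pmf_of_set UNIV) (\<lambda>r. rr_walk CARD('v) w [] r)"

definition rr_prev :: "'v rr_state \<Rightarrow> 'v \<Rightarrow> 'v" where
  "rr_prev R v = (if v = last (fst R) then snd R
                  else hd (tl (dropWhile (\<lambda>y. y \<noteq> v) (fst R))))"

definition rr_reroute :: "('v::finite) weights \<Rightarrow> 'v list \<Rightarrow> 'v \<Rightarrow> 'v \<Rightarrow> 'v rr_state pmf" where
  "rr_reroute w xs v p =
     (let pre = takeWhile (\<lambda>y. y \<noteq> v) xs @ [v] in
      if p \<in> set pre then return_pmf (pre, p) else rr_walk CARD('v) w pre p)"

definition apply_update :: "'v update \<Rightarrow> 'v weights \<Rightarrow> 'v weights" where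
  "apply_update upd w = (case upd of (u, v, inc, \<Delta>) \<Rightarrow>
     w(u := (w u)(v := (if inc then w u v + \<Delta> else w u v - \<Delta>))))"

definition weights_at :: "'v weights \<Rightarrow> 'v update list \<Rightarrow> nat \<Rightarrow> 'v weights" where
  "weights_at w0 ups t = foldl (\<lambda>w upd. apply_update upd w) w0 (take t ups)"

definition rr_maintain :: "('v::finite) weights \<Rightarrow> 'v update \<Rightarrow> 'v rr_state \<Rightarrow> 'v rr_state pmf" where
  "rr_maintain w upd R = (case upd of (u, v, inc, \<Delta>) \<Rightarrow>
     (let w' = apply_update upd w in
      if v \<notin> set (fst R) then return_pmf R
      else if inc then
        bind_pmf (bernoulli_pmf (\<Delta> / lt_W w' v))
          (\<lambda>b. if b then rr_reroute w' (fst R) v u else return_pmf R)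
      else if rr_prev R v = u then
        bind_pmf (bernoulli_pmf (\<Delta> / w u v))
          (\<lambda>b. if b then bind_pmf (lt_choice w' v) (\<lambda>u'. rr_reroute w' (fst R) v u')
               else return_pmf R)
      else return_pmf R))"

fun pmf_mapM :: "('a \<Rightarrow> 'b pmf) \<Rightarrow> 'a list \<Rightarrow> 'b list pmf" where
  "pmf_mapM f [] = return_pmf []"
| "pmf_mapM f (x # xs) = bind_pmf (f x) (\<lambda>y. map_pmf (\<lambda>ys. y # ys) (pmf_mapM f xs))"

fun rr_collection :: "('v::finite) weights \<Rightarrow> 'v update list \<Rightarrow> nat \<Rightarrow> nat \<Rightarrow> 'v rr_state list pmf" where
  "rr_collection w0 ups M 0 = pmf_mapM (\<lambda>_. rr_sample w0) [0..<M]"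
| "rr_collection w0 ups M (Suc t) =
     bind_pmf (rr_collection w0 ups M t)
       (\<lambda>Rs. pmf_mapM (rr_maintain (weights_at w0 ups t) (ups ! t)) Rs)"

definition F_R :: "'v rr_state list \<Rightarrow> 'v set \<Rightarrow> real" where
  "F_R Rs S = real (length (filter (\<lambda>R. set (fst R) \<inter> S \<noteq> {}) Rs)) / real (length Rs)"

end

theory Submission
  imports Defs
begin


lemma pmf_lt_choice:
  fixes w :: "('v::finite) weights"
  assumes nn: "\<And>y. w y v \<ge> 0" and pos: "lt_W w v > 0"
  shows "pmf (lt_choice w v) y = w y v / lt_W w v"
proof -
  have "(\<integral>\<^sup>+x. ennreal (w x v / lt_W w v) \<partial>count_space UNIV) = (\<Sum>x\<in>UNIV. ennreal (w x v / lt_W w v))"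
    by (simp add: nn_integral_count_space_finite)
  also have "\<dots> = ennreal (\<Sum>x\<in>UNIV. w x v / lt_W w v)"
    using nn pos by (intro sum_ennreal) auto
  also have "(\<Sum>x\<in>UNIV. w x v / lt_W w v) = 1"
    using pos by (simp add: sum_divide_distrib[symmetric] lt_W_def)
  finally have "(\<integral>\<^sup>+x. ennreal (w x v / lt_W w v) \<partial>count_space UNIV) = 1" by simp
  then show ?thesis using nn pos unfolding lt_choice_def
    by (simp add: pmf_embed_pmf)
qed



lemma apply_update_eq:
  "apply_update (u, v, inc, \<Delta>) w a b =
     (if a = u \<and> b = v then (if inc then w u v + \<Delta> else w u v - \<Delta>) else w a b)"
  by (simp add: apply_update_def)

lemma lt_choice_other:
  fixes w :: "('v::finite) weights"
  assumes "x \<noteq> v"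
  shows "lt_choice (apply_update (u, v, inc, \<Delta>) w) x = lt_choice w x"
proof -
  have "(\<lambda>y. apply_update (u, v, inc, \<Delta>) w y x) = (\<lambda>y. w y x)"
    using assms by (auto simp: apply_update_eq)
  then have "lt_W (apply_update (u, v, inc, \<Delta>) w) x = lt_W w x"
    unfolding lt_W_def by metis
  then show ?thesis unfolding lt_choice_def
    using \<open>(\<lambda>y. apply_update (u, v, inc, \<Delta>) w y x) = (\<lambda>y. w y x)\<close> by metis
qed

lemma lt_W_update:
  fixes w :: "('v::finite) weights"
  shows "lt_W (apply_update (u, v, inc, \<Delta>) w) v = (if inc then lt_W w v + \<Delta> else lt_W w v - \<Delta>)"
proof -
  have "lt_W (apply_update (u, v, inc, \<Delta>) w) v = (\<Sum>y\<in>UNIV. w y v + (if y = u then (if inc then \<Delta> else -\<Delta>) else 0))"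
    unfolding lt_W_def by (intro sum.cong) (auto simp: apply_update_eq)
  also have "\<dots> = lt_W w v + (if inc then \<Delta> else -\<Delta>)"
    by (simp add: sum.distrib lt_W_def)
  finally show ?thesis by simp
qed

lemma W_zero_imp:
  fixes w :: "('v::finite) weights"
  assumes nn: "\<And>y. w y v \<ge> 0" and "lt_W w v = 0"
  shows "w y v = 0"
proof -
  have "(\<Sum>y\<in>UNIV. w y v) = 0" using assms(2) by (simp add: lt_W_def)
  then have "\<forall>y\<in>UNIV. w y v = 0" using nn by (subst (asm) sum_nonneg_eq_0_iff) auto
  then show ?thesis by simp
qed

lemma lt_W_nonneg:
  fixes w :: "('v::finite) weights"
  assumes nn: "\<And>y. w y v \<ge> 0"
  shows "lt_W w v \<ge> 0"
  unfolding lt_W_def using nn by (simp add: sum_nonneg)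

lemma pmf_lt_choice_zero:
  fixes w :: "('v::finite) weights"
  assumes "lt_W w v = 0"
  shows "lt_choice w v = return_pmf v"
  using assms by (simp add: lt_choice_def)

lemma w_le_W:
  fixes w :: "('v::finite) weights"
  assumes nn: "\<And>y. w y v \<ge> 0"
  shows "w u v \<le> lt_W w v"
  unfolding lt_W_def using nn by (intro member_le_sum) auto

lemma choice_inc:
  fixes w :: "('v::finite) weights" and u v :: 'v
  assumes nn: "\<And>y. w y v \<ge> 0" and d: "\<Delta> > 0"
  defines "w' \<equiv> apply_update (u, v, True, \<Delta>) w"
  shows "lt_choice w' v = bind_pmf (bernoulli_pmf (\<Delta> / lt_W w' v)) (\<lambda>b. if b then return_pmf u else lt_choice w v)"
proof (rule pmf_eqI)
  fix y
  have W': "lt_W w' v = lt_W w v + \<Delta>" unfolding w'_def by (simp add: lt_W_update)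
  have W0: "lt_W w v \<ge> 0" using nn by (rule lt_W_nonneg)
  have nn': "\<And>y. w' y v \<ge> 0" using nn d by (auto simp: w'_def apply_update_eq intro: add_nonneg_nonneg)
  have p0: "0 \<le> \<Delta> / lt_W w' v" "\<Delta> / lt_W w' v \<le> 1" using W' W0 d by auto
  have "pmf (bind_pmf (bernoulli_pmf (\<Delta> / lt_W w' v)) (\<lambda>b. if b then return_pmf u else lt_choice w v)) y
      = (\<Sum>b\<in>UNIV. pmf (if b then return_pmf u else lt_choice w v) y * pmf (bernoulli_pmf (\<Delta> / lt_W w' v)) b)"
    by (simp add: pmf_bind integral_measure_pmf_real[where A=UNIV])
  also have "\<dots> = indicator {u} y * (\<Delta> / lt_W w' v) + pmf (lt_choice w v) y * (1 - \<Delta> / lt_W w' v)"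
    using p0 by (simp add: UNIV_bool pmf_return indicator_def)
  also have "\<dots> = w' y v / lt_W w' v"
  proof (cases "lt_W w v = 0")
    case True
    then have "\<And>z. w z v = 0" using W_zero_imp nn by blast
    then show ?thesis using True W' d by (simp add: pmf_lt_choice_zero w'_def apply_update_eq indicator_def pmf_return)
  next
    case False
    then have Wp: "lt_W w v > 0" using W0 by simp
    have W'p: "lt_W w' v > 0" using Wp W' d by simp
    have h1: "1 - \<Delta> / lt_W w' v = lt_W w v / lt_W w' v" using W' W'p by (simp add: field_simps)
    show ?thesis unfolding h1 using Wp W'p
      by (auto simp: pmf_lt_choice nn w'_def apply_update_eq indicator_def add_divide_distrib)
  qed
  also have "\<dots> = pmf (lt_choice w' v) y" using W' W0 d nn' by (simp add: pmf_lt_choice)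
  finally show "pmf (lt_choice w' v) y = pmf (bind_pmf (bernoulli_pmf (\<Delta> / lt_W w' v)) (\<lambda>b. if b then return_pmf u else lt_choice w v)) y" by simp
qed



lemma choice_dec:
  fixes w :: "('v::finite) weights" and u v :: 'v
  assumes nn: "\<And>y. w y v \<ge> 0" and d: "\<Delta> > 0" and le: "\<Delta> \<le> w u v"
  defines "w' \<equiv> apply_update (u, v, False, \<Delta>) w"
  shows "lt_choice w' v = bind_pmf (lt_choice w v) (\<lambda>p. if p = u then
            bind_pmf (bernoulli_pmf (\<Delta> / w u v)) (\<lambda>b. if b then lt_choice w' v else return_pmf u)
            else return_pmf p)"
proof (rule pmf_eqI)
  fix y
  define F where "F = (\<lambda>p. if p = u then
            bind_pmf (bernoulli_pmf (\<Delta> / w u v)) (\<lambda>b. if b then lt_choice w' v else return_pmf u)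
            else return_pmf p)"
  define W where "W = lt_W w v"
  have W': "lt_W w' v = W - \<Delta>" unfolding w'_def W_def by (simp add: lt_W_update)
  have wW: "w u v \<le> W" unfolding W_def using nn by (rule w_le_W)
  have Wp: "W > 0" using wW le d by simp
  have W'0: "lt_W w' v \<ge> 0" using W' wW le by simp
  have nn': "\<And>y. w' y v \<ge> 0" using nn le by (auto simp: w'_def apply_update_eq)
  have p0: "0 \<le> \<Delta> / w u v" "\<Delta> / w u v \<le> 1" using le d by auto
  have Fu: "pmf (F u) y = \<Delta> / w u v * pmf (lt_choice w' v) y + (1 - \<Delta> / w u v) * indicator {u} y"
    unfolding F_def using p0
    by (simp add: pmf_bind integral_measure_pmf_real[where A=UNIV] UNIV_bool pmf_return indicator_def)
  have "pmf (bind_pmf (lt_choice w v) F) y = (\<Sum>p\<in>UNIV. pmf (F p) y * pmf (lt_choice w v) p)"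
    by (simp add: pmf_bind integral_measure_pmf_real[where A=UNIV])
  also have "\<dots> = pmf (F u) y * pmf (lt_choice w v) u + (\<Sum>p\<in>UNIV-{u}. pmf (F p) y * pmf (lt_choice w v) p)"
    by (simp add: sum.remove[of UNIV u])
  also have "(\<Sum>p\<in>UNIV-{u}. pmf (F p) y * pmf (lt_choice w v) p) = (\<Sum>p\<in>UNIV-{u}. if p = y then w y v / W else 0)"
    by (intro sum.cong) (auto simp: F_def pmf_return pmf_lt_choice nn Wp W_def[symmetric])
  also have "\<dots> = (if y = u then 0 else w y v / W)"
    by (simp add: sum.delta)
  also have "pmf (F u) y * pmf (lt_choice w v) u + (if y = u then 0 else w y v / W)
      = (w' y v + \<Delta> * pmf (lt_choice w' v) y) / W"
  proof (cases "y = u")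
    case True
    have wpos: "w u v > 0" using d le by simp
    have pu: "pmf (lt_choice w v) u = w u v / W" using Wp unfolding W_def by (rule pmf_lt_choice[of w v, OF nn])
    show ?thesis unfolding Fu pu using True wpos Wp
      by (simp add: w'_def apply_update_eq field_simps)
  next
    case False
    have "pmf (lt_choice w v) u = w u v / W" using Wp unfolding W_def by (rule pmf_lt_choice[of w v, OF nn])
    then show ?thesis unfolding Fu using False d le
      by (simp add: w'_def apply_update_eq add_divide_distrib)
  qed
  also have "\<dots> = pmf (lt_choice w' v) y"
  proof (cases "lt_W w' v = 0")
    case True
    then have "\<And>z. w' z v = 0" using W_zero_imp nn' by blast
    moreover have "W = \<Delta>" using True W' by simp
    ultimately show ?thesis using True d by (simp add: pmf_lt_choice_zero)
  next
    case False
    then have W'p: "lt_W w' v > 0" using W'0 by simp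
    have WW: "W = lt_W w' v + \<Delta>" using W' by simp
    have e: "w' y v + \<Delta> * (w' y v / lt_W w' v) = (w' y v / lt_W w' v) * (lt_W w' v + \<Delta>)"
      using W'p by (simp add: field_simps)
    have "lt_W w' v + \<Delta> > 0" using W'p d by simp
    then show ?thesis unfolding WW pmf_lt_choice[of w' v, OF nn' W'p] e by simp
  qed
  finally show "pmf (lt_choice w' v) y = pmf (bind_pmf (lt_choice w v) F) y" by simp
qed



lemma rr_walk_set:
  "R \<in> set_pmf (rr_walk k w pre x) \<Longrightarrow> distinct (pre @ [x]) \<Longrightarrow>
     (\<exists>ys. fst R = pre @ x # ys) \<and> distinct (fst R)"
proof (induction k arbitrary: pre x R)
  case 0
  then show ?case by auto
next
  case (Suc k)
  from Suc.prems(1) obtain p where p: "p \<in> set_pmf (lt_choice w x)"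
    and R: "R \<in> set_pmf (if p \<in> set (pre @ [x]) then return_pmf (pre @ [x], p) else rr_walk k w (pre @ [x]) p)"
    by auto
  show ?case
  proof (cases "p \<in> set (pre @ [x])")
    case True
    then show ?thesis using R Suc.prems(2) by auto
  next
    case False
    then have "R \<in> set_pmf (rr_walk k w (pre @ [x]) p)" using R by simp
    moreover have "distinct ((pre @ [x]) @ [p])" using False Suc.prems(2) by auto
    ultimately have "(\<exists>ys. fst R = (pre @ [x]) @ p # ys) \<and> distinct (fst R)" by (rule Suc.IH)
    then show ?thesis by auto
  qed
qed

lemma distinct_len_card:
  fixes pre :: "('v::finite) list"
  assumes "distinct (pre @ [x])"
  shows "length pre < CARD('v)"
proof -
  have "length (pre @ [x]) = card (set (pre @ [x]))" using assms by (simp add: distinct_card)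
  also have "\<dots> \<le> CARD('v)" by (rule card_mono) auto
  finally show ?thesis by simp
qed

lemma rr_walk_fuel:
  fixes pre :: "('v::finite) list"
  assumes "distinct (pre @ [x])" "CARD('v) \<le> length pre + k" "CARD('v) \<le> length pre + k'"
  shows "rr_walk k w pre x = rr_walk k' w pre x"
  using assms
proof (induction k arbitrary: k' pre x)
  case 0
  then show ?case using distinct_len_card[OF "0.prems"(1)] by simp
next
  case (Suc k)
  show ?case
  proof (cases k')
    case 0
    then show ?thesis using distinct_len_card[OF Suc.prems(1)] Suc.prems(3) by simp
  next
    case (Suc k'')
    have "\<And>p. p \<notin> set (pre @ [x]) \<Longrightarrow> rr_walk k w (pre @ [x]) p = rr_walk k'' w (pre @ [x]) p"
      using Suc.prems Suc by (intro Suc.IH) auto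
    then show ?thesis using Suc by (auto intro!: bind_pmf_cong)
  qed
qed

lemma rr_walk_agree:
  assumes "\<And>y. y \<notin> set pre \<Longrightarrow> lt_choice w y = lt_choice w' y" "x \<notin> set pre"
  shows "rr_walk k w pre x = rr_walk k w' pre x"
  using assms
proof (induction k arbitrary: pre x)
  case 0
  then show ?case by simp
next
  case (Suc k)
  have "\<And>p. p \<notin> set (pre @ [x]) \<Longrightarrow> rr_walk k w (pre @ [x]) p = rr_walk k w' (pre @ [x]) p"
    using Suc.prems by (intro Suc.IH) auto
  then show ?case using Suc.prems by (auto intro!: bind_pmf_cong)
qed



lemma maint_notin:
  "v \<notin> set (fst R) \<Longrightarrow> rr_maintain w (u, v, inc, \<Delta>) R = return_pmf R"
  by (simp add: rr_maintain_def)

lemma takeWhile_pre: "v \<notin> set pre \<Longrightarrow> takeWhile (\<lambda>y. y \<noteq> v) (pre @ v # zs) = pre"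
  by (induction pre) auto

lemma dropWhile_pre: "v \<notin> set pre \<Longrightarrow> dropWhile (\<lambda>y. y \<noteq> v) (pre @ v # zs) = v # zs"
  by (induction pre) auto

lemma K_support:
  fixes w' :: "('v::finite) weights"
  assumes "distinct (pre @ [v])"
    and R: "R \<in> set_pmf (if p \<in> set (pre @ [v]) then return_pmf (pre @ [v], p) else rr_walk CARD('v) w' (pre @ [v]) p)"
  shows "v \<in> set (fst R) \<and> takeWhile (\<lambda>y. y \<noteq> v) (fst R) = pre \<and> rr_prev R v = p"
proof (cases "p \<in> set (pre @ [v])")
  case True
  then have "R = (pre @ [v], p)" using R by simp
  then show ?thesis using assms(1) using takeWhile_pre[of v pre "[]"] by (auto simp: rr_prev_def)
next
  case False
  then have "R \<in> set_pmf (rr_walk CARD('v) w' (pre @ [v]) p)" using R by simp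
  moreover have "distinct ((pre @ [v]) @ [p])" using False assms(1) by auto
  ultimately obtain ys where ys: "fst R = (pre @ [v]) @ p # ys" and dR: "distinct (fst R)"
    using rr_walk_set by blast
  have vnot: "v \<notin> set pre" using assms(1) by simp
  have "last (fst R) \<noteq> v" using ys dR by (auto simp: last_append)
  moreover have "dropWhile (\<lambda>y. y \<noteq> v) (fst R) = v # p # ys"
    using ys vnot dropWhile_pre[of v pre] by simp
  moreover have "takeWhile (\<lambda>y. y \<noteq> v) (fst R) = pre"
    using ys vnot takeWhile_pre[of v pre] by simp
  ultimately show ?thesis using ys by (simp add: rr_prev_def)
qed



lemma maintain_walk:
  fixes w :: "('v::finite) weights" and u v :: 'v
  assumes nn: "\<And>a b. w a b \<ge> 0" and d: "\<Delta> > 0" and dec: "\<not> inc \<Longrightarrow> \<Delta> \<le> w u v"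
  shows "distinct (pre @ [x]) \<Longrightarrow> v \<notin> set pre \<Longrightarrow> CARD('v) \<le> length pre + k \<Longrightarrow>
    bind_pmf (rr_walk k w pre x) (rr_maintain w (u, v, inc, \<Delta>)) = rr_walk k (apply_update (u, v, inc, \<Delta>) w) pre x"
proof (induction k arbitrary: pre x)
  case 0
  then show ?case using distinct_len_card[OF "0"(1)] by simp
next
  case (Suc k)
  define w' where "w' = apply_update (u, v, inc, \<Delta>) w"
  define maint where "maint = rr_maintain w (u, v, inc, \<Delta>)"
  have LHS: "bind_pmf (rr_walk (Suc k) w pre x) maint = bind_pmf (lt_choice w x) (\<lambda>p. bind_pmf (if p \<in> set (pre @ [x]) then return_pmf (pre @ [x], p) else rr_walk k w (pre @ [x]) p) maint)"
    by (simp add: bind_assoc_pmf)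
  show ?case
  proof (cases "x = v")
    case False
    have step: "bind_pmf (if p \<in> set (pre @ [x]) then return_pmf (pre @ [x], p) else rr_walk k w (pre @ [x]) p) maint
       = (if p \<in> set (pre @ [x]) then return_pmf (pre @ [x], p) else rr_walk k w' (pre @ [x]) p)" for p
    proof (cases "p \<in> set (pre @ [x])")
      case True
      then show ?thesis using Suc.prems False by (simp add: bind_return_pmf maint_def maint_notin)
    next
      case False': False
      have "bind_pmf (rr_walk k w (pre @ [x]) p) maint = rr_walk k w' (pre @ [x]) p"
        unfolding maint_def w'_def using Suc.prems False False' by (intro Suc.IH) auto
      then show ?thesis using False' by simp
    qed
    have "bind_pmf (rr_walk (Suc k) w pre x) maint = rr_walk (Suc k) w' pre x"
      unfolding LHS step w'_def using False by (simp add: lt_choice_other)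
    then show ?thesis by (simp add: maint_def w'_def)
  next
    case True
    define K where "K = (\<lambda>q. if q \<in> set (pre @ [v]) then return_pmf (pre @ [v], q) else rr_walk CARD('v) w' (pre @ [v]) q)"
    have dv: "distinct (pre @ [v])" using Suc.prems True by simp
    have agree: "\<And>y. y \<notin> set (pre @ [v]) \<Longrightarrow> lt_choice w y = lt_choice w' y"
      unfolding w'_def by (subst lt_choice_other) auto
    have fuel: "rr_walk k w'' (pre @ [v]) p = rr_walk CARD('v) w'' (pre @ [v]) p"
      if "p \<notin> set (pre @ [v])" for p w''
      using that dv Suc.prems(3) by (intro rr_walk_fuel) auto
    have L: "(if p \<in> set (pre @ [v]) then return_pmf (pre @ [v], p) else rr_walk k w (pre @ [v]) p) = K p" for p
    proof (cases "p \<in> set (pre @ [v])")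
      case False
      have "rr_walk k w (pre @ [v]) p = rr_walk k w' (pre @ [v]) p"
        using agree False by (intro rr_walk_agree) auto
      also have "\<dots> = rr_walk CARD('v) w' (pre @ [v]) p" using False by (rule fuel)
      finally show ?thesis using False by (simp add: K_def)
    qed (simp add: K_def)
    have RHS: "rr_walk (Suc k) w' pre v = bind_pmf (lt_choice w' v) K"
      unfolding K_def using fuel by (auto intro!: bind_pmf_cong)
    have LHS': "bind_pmf (rr_walk (Suc k) w pre x) maint = bind_pmf (lt_choice w v) (\<lambda>p. bind_pmf (K p) maint)"
      using LHS unfolding True L .
    have supp: "\<And>p R. R \<in> set_pmf (K p) \<Longrightarrow> v \<in> set (fst R) \<and> takeWhile (\<lambda>y. y \<noteq> v) (fst R) = pre \<and> rr_prev R v = p"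
      unfolding K_def using K_support[OF dv] by blast
    have reroute: "\<And>p R q. R \<in> set_pmf (K p) \<Longrightarrow> rr_reroute w' (fst R) v q = K q"
      using supp by (simp add: rr_reroute_def K_def Let_def)
    have "bind_pmf (lt_choice w v) (\<lambda>p. bind_pmf (K p) maint) = bind_pmf (lt_choice w' v) K"
    proof (cases inc)
      case inc: True
      have w'T: "apply_update (u, v, True, \<Delta>) w = w'" using inc by (simp add: w'_def)
      have M: "bind_pmf (K p) maint = bind_pmf (bernoulli_pmf (\<Delta> / lt_W w' v)) (\<lambda>b. if b then K u else K p)" for p
      proof -
        have "bind_pmf (K p) maint = bind_pmf (K p) (\<lambda>R. bind_pmf (bernoulli_pmf (\<Delta> / lt_W w' v)) (\<lambda>b. if b then K u else return_pmf R))"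
        proof (intro bind_pmf_cong refl)
          fix R assume R: "R \<in> set_pmf (K p)"
          have "rr_reroute w' (fst R) v u = K u" using reroute[OF R] .
          moreover have "v \<in> set (fst R)" using supp[OF R] by blast
          ultimately show "maint R = bind_pmf (bernoulli_pmf (\<Delta> / lt_W w' v)) (\<lambda>b. if b then K u else return_pmf R)"
            using inc by (simp add: maint_def rr_maintain_def Let_def w'T) (intro bind_pmf_cong; simp)
        qed
        also have "\<dots> = bind_pmf (bernoulli_pmf (\<Delta> / lt_W w' v)) (\<lambda>b. bind_pmf (K p) (\<lambda>R. if b then K u else return_pmf R))"
          by (rule bind_commute_pmf)
        also have "\<dots> = bind_pmf (bernoulli_pmf (\<Delta> / lt_W w' v)) (\<lambda>b. if b then K u else K p)"
          by (intro bind_pmf_cong refl) (simp add: bind_return_pmf')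
        finally show ?thesis .
      qed
      have "bind_pmf (lt_choice w v) (\<lambda>p. bind_pmf (K p) maint)
          = bind_pmf (bernoulli_pmf (\<Delta> / lt_W w' v)) (\<lambda>b. bind_pmf (lt_choice w v) (\<lambda>p. if b then K u else K p))"
        unfolding M by (rule bind_commute_pmf)
      also have "\<dots> = bind_pmf (bernoulli_pmf (\<Delta> / lt_W w' v)) (\<lambda>b. bind_pmf (if b then return_pmf u else lt_choice w v) K)"
        by (rule bind_pmf_cong[OF refl]) (simp add: bind_return_pmf)
      also have "\<dots> = bind_pmf (bind_pmf (bernoulli_pmf (\<Delta> / lt_W w' v)) (\<lambda>b. if b then return_pmf u else lt_choice w v)) K"
        by (simp add: bind_assoc_pmf)
      also have "\<dots> = bind_pmf (lt_choice w' v) K"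
        using choice_inc[of w v \<Delta> u] nn d inc unfolding w'_def by simp
      finally show ?thesis .
    next
      case inc: False
      have w'T: "apply_update (u, v, False, \<Delta>) w = w'" using inc by (simp add: w'_def)
      define B where "B = bernoulli_pmf (\<Delta> / w u v)"
      have M: "bind_pmf (K p) maint = (if p = u then bind_pmf B (\<lambda>b. if b then bind_pmf (lt_choice w' v) K else K p) else K p)" for p
      proof (cases "p = u")
        case True
        have "bind_pmf (K p) maint = bind_pmf (K p) (\<lambda>R. bind_pmf B (\<lambda>b. if b then bind_pmf (lt_choice w' v) K else return_pmf R))"
        proof (intro bind_pmf_cong refl)
          fix R assume R: "R \<in> set_pmf (K p)"
          have RK: "rr_reroute w' (fst R) v = K" using reroute[OF R] by (rule ext)
          moreover have "v \<in> set (fst R)" "rr_prev R v = p" using supp[OF R] by blast+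
          ultimately show "maint R = bind_pmf B (\<lambda>b. if b then bind_pmf (lt_choice w' v) K else return_pmf R)"
            using inc True by (simp add: maint_def rr_maintain_def Let_def w'T B_def) (simp only: RK)
        qed
        also have "\<dots> = bind_pmf B (\<lambda>b. bind_pmf (K p) (\<lambda>R. if b then bind_pmf (lt_choice w' v) K else return_pmf R))"
          by (rule bind_commute_pmf)
        also have "\<dots> = bind_pmf B (\<lambda>b. if b then bind_pmf (lt_choice w' v) K else K p)"
          by (intro bind_pmf_cong refl) (simp add: bind_return_pmf')
        finally show ?thesis using True by simp
      next
        case False
        have "bind_pmf (K p) maint = bind_pmf (K p) return_pmf"
        proof (intro bind_pmf_cong refl)
          fix R assume R: "R \<in> set_pmf (K p)"
          have "v \<in> set (fst R)" "rr_prev R v = p" using supp[OF R] by blast+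
          then show "maint R = return_pmf R"
            using inc False by (simp add: maint_def rr_maintain_def Let_def)
        qed
        then show ?thesis using False by (simp add: bind_return_pmf')
      qed
      have "bind_pmf (lt_choice w v) (\<lambda>p. bind_pmf (K p) maint)
          = bind_pmf (lt_choice w v) (\<lambda>p. bind_pmf (if p = u then bind_pmf B (\<lambda>b. if b then lt_choice w' v else return_pmf u) else return_pmf p) K)"
        unfolding M by (intro bind_pmf_cong refl) (auto simp: bind_return_pmf bind_assoc_pmf intro!: bind_pmf_cong)
      also have "\<dots> = bind_pmf (bind_pmf (lt_choice w v) (\<lambda>p. if p = u then bind_pmf B (\<lambda>b. if b then lt_choice w' v else return_pmf u) else return_pmf p)) K"
        by (simp add: bind_assoc_pmf)
      also have "\<dots> = bind_pmf (lt_choice w' v) K"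
        using choice_dec[of w v \<Delta> u, unfolded w'T] nn d inc dec unfolding B_def by simp
      finally show ?thesis .
    qed
    then show ?thesis using LHS' RHS True by (simp add: maint_def w'_def)
  qed
qed



lemma rr_sample_maintain:
  fixes w :: "('v::finite) weights"
  assumes nn: "\<And>a b. w a b \<ge> 0" and d: "\<Delta> > 0" and dec: "\<not> inc \<Longrightarrow> \<Delta> \<le> w u v"
  shows "bind_pmf (rr_sample w) (rr_maintain w (u, v, inc, \<Delta>)) = rr_sample (apply_update (u, v, inc, \<Delta>) w)"
  unfolding rr_sample_def bind_assoc_pmf
  by (intro bind_pmf_cong refl maintain_walk[of w \<Delta> inc u v, OF nn d dec]) auto

lemma pmf_mapM_bind:
  "bind_pmf (pmf_mapM g xs) (pmf_mapM f) = pmf_mapM (\<lambda>x. bind_pmf (g x) f) xs"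
proof (induction xs)
  case Nil
  then show ?case by (simp add: bind_return_pmf)
next
  case (Cons x xs)
  have "bind_pmf (pmf_mapM g (x # xs)) (pmf_mapM f)
      = bind_pmf (g x) (\<lambda>y. bind_pmf (pmf_mapM g xs) (\<lambda>ys. bind_pmf (f y) (\<lambda>z. map_pmf (\<lambda>zs. z # zs) (pmf_mapM f ys))))"
    by (simp add: bind_assoc_pmf bind_map_pmf)
  also have "\<dots> = bind_pmf (g x) (\<lambda>y. bind_pmf (f y) (\<lambda>z. map_pmf (\<lambda>zs. z # zs) (bind_pmf (pmf_mapM g xs) (pmf_mapM f))))"
    by (subst bind_commute_pmf) (simp add: map_bind_pmf)
  also have "\<dots> = pmf_mapM (\<lambda>x. bind_pmf (g x) f) (x # xs)"
    by (simp add: Cons.IH bind_assoc_pmf)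
  finally show ?case .
qed

lemma weights_at_Suc:
  "t < length ups \<Longrightarrow> weights_at w0 ups (Suc t) = apply_update (ups ! t) (weights_at w0 ups t)"
  by (simp add: weights_at_def take_Suc_conv_app_nth)

lemma weights_at_nonneg:
  fixes w0 :: "'v weights"
  assumes self_nonneg: "\<forall>v. w0 v v \<ge> 0" and no_edges: "\<forall>u v. u \<noteq> v \<longrightarrow> w0 u v = 0"
    and valid_ups: "\<forall>i < length ups. case ups ! i of (u, v, inc, \<Delta>) \<Rightarrow>
                       \<Delta> > 0 \<and> (\<not> inc \<longrightarrow> \<Delta> \<le> weights_at w0 ups i u v)"
  shows "t \<le> length ups \<Longrightarrow> weights_at w0 ups t a b \<ge> 0"
proof (induction t arbitrary: a b)
  case 0
  then show ?case using self_nonneg no_edges by (cases "a = b") (auto simp: weights_at_def)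
next
  case (Suc t)
  obtain u v inc \<Delta> where e: "ups ! t = (u, v, inc, \<Delta>)" by (cases "ups ! t") auto
  have "t < length ups" using Suc.prems by simp
  have "case ups ! t of (u, v, inc, \<Delta>) \<Rightarrow> \<Delta> > 0 \<and> (\<not> inc \<longrightarrow> \<Delta> \<le> weights_at w0 ups t u v)"
    using valid_ups[rule_format, OF \<open>t < length ups\<close>] .
  then have "\<Delta> > 0 \<and> (\<not> inc \<longrightarrow> \<Delta> \<le> weights_at w0 ups t u v)" using e by simp
  moreover have IH: "\<And>a b. weights_at w0 ups t a b \<ge> 0" using Suc by simp
  ultimately show ?case unfolding weights_at_Suc[OF \<open>t < length ups\<close>] e apply_update_eq
    using IH[of a b] IH[of u v] by auto
qed



fun dwalk :: "nat \<Rightarrow> ('v \<Rightarrow> 'v) \<Rightarrow> 'v list \<Rightarrow> 'v \<Rightarrow> 'v rr_state" where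
  "dwalk 0 \<sigma> pre x = (pre @ [x], x)"
| "dwalk (Suc k) \<sigma> pre x = (if \<sigma> x \<in> set (pre @ [x]) then (pre @ [x], \<sigma> x) else dwalk k \<sigma> (pre @ [x]) (\<sigma> x))"

fun is_path :: "('v \<Rightarrow> 'v) \<Rightarrow> 'v list \<Rightarrow> bool" where
  "is_path \<sigma> [] = True"
| "is_path \<sigma> [a] = True"
| "is_path \<sigma> (a # b # zs) = (\<sigma> a = b \<and> is_path \<sigma> (b # zs))"

lemma dwalk_agree:
  "x \<notin> set pre \<Longrightarrow> (\<And>y. y \<notin> set pre \<Longrightarrow> \<sigma> y = \<sigma>' y) \<Longrightarrow> dwalk k \<sigma> pre x = dwalk k \<sigma>' pre x"
proof (induction k arbitrary: pre x)
  case 0 then show ?case by simp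
next
  case (Suc k)
  have sx: "\<sigma> x = \<sigma>' x" using Suc.prems by simp
  show ?case
  proof (cases "\<sigma> x \<in> set (pre @ [x])")
    case True then show ?thesis using sx by simp
  next
    case False
    have "dwalk k \<sigma> (pre @ [x]) (\<sigma> x) = dwalk k \<sigma>' (pre @ [x]) (\<sigma> x)"
      using False Suc.prems by (intro Suc.IH) auto
    then show ?thesis using False sx by simp
  qed
qed

lemma rr_walk_dwalk:
  fixes w :: "('v::finite) weights"
  shows "x \<notin> set pre \<Longrightarrow> rr_walk k w pre x = map_pmf (\<lambda>\<sigma>. dwalk k \<sigma> pre x) (Pi_pmf (- set pre) undefined (lt_choice w))"
proof (induction k arbitrary: pre x)
  case 0 then show ?case by (simp add: map_pmf_const)
next
  case (Suc k)
  define A where "A = - set (pre @ [x])"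
  have ins: "- set pre = insert x A" using Suc.prems unfolding A_def by auto
  have xA: "x \<notin> A" unfolding A_def by simp
  have "map_pmf (\<lambda>\<sigma>. dwalk (Suc k) \<sigma> pre x) (Pi_pmf (- set pre) undefined (lt_choice w))
     = bind_pmf (lt_choice w x) (\<lambda>p. map_pmf (\<lambda>f. dwalk (Suc k) (f(x := p)) pre x) (Pi_pmf A undefined (lt_choice w)))"
    unfolding ins Pi_pmf_insert[OF finite xA]
    by (simp add: map_pmf_def pair_pmf_def bind_assoc_pmf bind_return_pmf)
  also have "\<dots> = bind_pmf (lt_choice w x) (\<lambda>p. if p \<in> set (pre @ [x]) then return_pmf (pre @ [x], p) else rr_walk k w (pre @ [x]) p)"
  proof (rule bind_pmf_cong[OF refl])
    fix p
    show "map_pmf (\<lambda>f. dwalk (Suc k) (f(x := p)) pre x) (Pi_pmf A undefined (lt_choice w)) =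
      (if p \<in> set (pre @ [x]) then return_pmf (pre @ [x], p) else rr_walk k w (pre @ [x]) p)"
    proof (cases "p \<in> set (pre @ [x])")
      case True then show ?thesis by (simp add: map_pmf_const)
    next
      case False
      have "map_pmf (\<lambda>f. dwalk (Suc k) (f(x := p)) pre x) (Pi_pmf A undefined (lt_choice w))
          = map_pmf (\<lambda>f. dwalk k f (pre @ [x]) p) (Pi_pmf A undefined (lt_choice w))"
        using False by (intro map_pmf_cong refl, simp, intro dwalk_agree) auto
      also have "\<dots> = rr_walk k w (pre @ [x]) p" unfolding A_def using False by (intro Suc.IH[symmetric]) 
      finally show ?thesis using False by simp
    qed
  qed
  finally show ?case by simp
qed



lemma dwalk_struct:
  fixes pre :: "('v::finite) list"
  shows "distinct (pre @ [x]) \<Longrightarrow> CARD('v) \<le> length pre + k \<Longrightarrow>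
    \<exists>ys. fst (dwalk k \<sigma> pre x) = pre @ x # ys \<and> is_path \<sigma> (x # ys) \<and> \<sigma> (last (x # ys)) = snd (dwalk k \<sigma> pre x)
         \<and> snd (dwalk k \<sigma> pre x) \<in> set (fst (dwalk k \<sigma> pre x))"
proof (induction k arbitrary: pre x)
  case 0
  then show ?case using distinct_len_card[OF "0.prems"(1)] by simp
next
  case (Suc k)
  show ?case
  proof (cases "\<sigma> x \<in> set (pre @ [x])")
    case True
    then show ?thesis by (intro exI[of _ "[]"]) auto
  next
    case False
    have "distinct ((pre @ [x]) @ [\<sigma> x])" using False Suc.prems by auto
    moreover have "CARD('v) \<le> length (pre @ [x]) + k" using Suc.prems by simp
    ultimately obtain ys where ys: "fst (dwalk k \<sigma> (pre @ [x]) (\<sigma> x)) = (pre @ [x]) @ \<sigma> x # ys"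
      "is_path \<sigma> (\<sigma> x # ys)" "\<sigma> (last (\<sigma> x # ys)) = snd (dwalk k \<sigma> (pre @ [x]) (\<sigma> x))"
      "snd (dwalk k \<sigma> (pre @ [x]) (\<sigma> x)) \<in> set (fst (dwalk k \<sigma> (pre @ [x]) (\<sigma> x)))"
      using Suc.IH by blast
    show ?thesis using False ys by (intro exI[of _ "\<sigma> x # ys"]) auto
  qed
qed

lemma is_path_iter: "is_path \<sigma> (x # ys) \<Longrightarrow> y \<in> set (x # ys) \<Longrightarrow> \<exists>j. (\<sigma> ^^ j) x = y"
proof (induction ys arbitrary: x)
  case Nil
  then show ?case by (intro exI[of _ 0]) simp
next
  case (Cons b ys)
  show ?case
  proof (cases "y = x")
    case True then show ?thesis by (intro exI[of _ 0]) simp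
  next
    case False
    then have "y \<in> set (b # ys)" using Cons.prems by simp
    moreover have "is_path \<sigma> (b # ys)" and b: "\<sigma> x = b" using Cons.prems by simp_all
    ultimately obtain j where "(\<sigma> ^^ j) b = y" using Cons.IH by blast
    then have "(\<sigma> ^^ Suc j) x = y" using b by (simp add: funpow_Suc_right del: funpow.simps)
    then show ?thesis by blast
  qed
qed

lemma is_path_next: "is_path \<sigma> zs \<Longrightarrow> y \<in> set zs \<Longrightarrow> y \<noteq> last zs \<Longrightarrow> \<sigma> y \<in> set zs"
  by (induction \<sigma> zs rule: is_path.induct) auto

lemma is_path_closed: "is_path \<sigma> zs \<Longrightarrow> \<sigma> (last zs) \<in> set zs \<Longrightarrow> y \<in> set zs \<Longrightarrow> \<sigma> y \<in> set zs"
  using is_path_next by metis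



lemma hit_iff:
  fixes \<sigma> :: "('v::finite) \<Rightarrow> 'v"
  shows "(set (fst (dwalk CARD('v) \<sigma> [] r)) \<inter> S \<noteq> {}) = (r \<in> activated \<sigma> S)"
proof -
  obtain ys where ys: "fst (dwalk CARD('v) \<sigma> [] r) = r # ys" "is_path \<sigma> (r # ys)"
    "\<sigma> (last (r # ys)) = snd (dwalk CARD('v) \<sigma> [] r)"
    "snd (dwalk CARD('v) \<sigma> [] r) \<in> set (fst (dwalk CARD('v) \<sigma> [] r))"
    using dwalk_struct[of "[]" r "CARD('v)" \<sigma>] by auto
  have orb: "(\<sigma> ^^ j) r \<in> set (r # ys)" for j
  proof (induction j)
    case 0 then show ?case by simp
  next
    case (Suc j)
    have "\<sigma> (last (r # ys)) \<in> set (r # ys)" using ys by simp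
    then show ?case using is_path_closed[OF ys(2) _ Suc] by simp
  qed
  have sub: "y \<in> set (r # ys) \<Longrightarrow> \<exists>j. (\<sigma> ^^ j) r = y" for y using is_path_iter[OF ys(2)] by blast
  show ?thesis unfolding ys(1) activated_def
    using orb sub by blast
qed



definition Qr :: "('v::finite) weights \<Rightarrow> 'v set \<Rightarrow> 'v \<Rightarrow> ennreal" where
  "Qr w S r = (\<integral>\<^sup>+\<sigma>. indicator (activated \<sigma> S) r \<partial>live_edge_pmf w)"

lemma rr_hit_nn:
  fixes w :: "('v::finite) weights"
  shows "(\<integral>\<^sup>+R. indicator {R. set (fst R) \<inter> S \<noteq> {}} R \<partial>rr_sample w) = (\<Sum>r\<in>UNIV. Qr w S r) / of_nat CARD('v)"
proof -
  have "\<And>r. (\<integral>\<^sup>+R. indicator {R. set (fst R) \<inter> S \<noteq> {}} R \<partial>rr_walk CARD('v) w [] r) = Qr w S r"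
  proof -
    fix r :: 'v
    have "rr_walk CARD('v) w [] r = map_pmf (\<lambda>\<sigma>. dwalk CARD('v) \<sigma> [] r) (live_edge_pmf w)"
      using rr_walk_dwalk[of r "[]" "CARD('v)" w] by (simp add: live_edge_pmf_def)
    then show "(\<integral>\<^sup>+R. indicator {R. set (fst R) \<inter> S \<noteq> {}} R \<partial>rr_walk CARD('v) w [] r) = Qr w S r"
      by (simp add: Qr_def indicator_def hit_iff)
  qed
  then show ?thesis unfolding rr_sample_def
    by (simp add: nn_integral_pmf_of_set)
qed

lemma influence_nn:
  fixes w :: "('v::finite) weights"
  shows "influence w S = enn2real (\<Sum>r\<in>UNIV. Qr w S r)"
proof -
  have "influence w S = enn2real (\<integral>\<^sup>+\<sigma>. ennreal (real (card (activated \<sigma> S))) \<partial>live_edge_pmf w)"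
    unfolding influence_def by (rule integral_eq_nn_integral) auto
  also have "(\<lambda>\<sigma>. ennreal (real (card (activated \<sigma> S)))) = (\<lambda>\<sigma>. \<Sum>r\<in>UNIV. indicator (activated \<sigma> S) r)"
  proof
    fix \<sigma> :: "'v \<Rightarrow> 'v"
    have "real (card (activated \<sigma> S)) = (\<Sum>r\<in>UNIV. indicator (activated \<sigma> S) r)"
    proof -
      have "(\<Sum>r\<in>UNIV. (1::real) * indicator (activated \<sigma> S) r) = (\<Sum>r\<in>UNIV \<inter> activated \<sigma> S. 1)"
        by (simp add: indicator_def sum.If_cases)
      then show ?thesis by simp
    qed
    then show "ennreal (real (card (activated \<sigma> S))) = (\<Sum>r\<in>UNIV. indicator (activated \<sigma> S) r)"
      by (simp add: ennreal_indicator[symmetric])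
  qed
  also have "(\<integral>\<^sup>+\<sigma>. (\<Sum>r\<in>UNIV. indicator (activated \<sigma> S) r) \<partial>live_edge_pmf w) = (\<Sum>r\<in>UNIV. Qr w S r)"
    unfolding Qr_def by (rule nn_integral_sum) auto
  finally show ?thesis .
qed



lemma mapM_len: "Rs \<in> set_pmf (pmf_mapM f xs) \<Longrightarrow> length Rs = length xs"
  by (induction xs arbitrary: Rs) auto

lemma mapM_count:
  "(\<integral>\<^sup>+Rs. ennreal (real (length (filter P Rs))) \<partial>pmf_mapM (\<lambda>_. D) xs)
     = of_nat (length xs) * (\<integral>\<^sup>+R. indicator {R. P R} R \<partial>D)"
proof (induction xs)
  case Nil
  then show ?case by simp
next
  case (Cons x xs)
  have e: "ennreal (real (length (filter P (y # ys)))) = indicator {R. P R} y + ennreal (real (length (filter P ys)))" for y ys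
    by (simp add: indicator_def ennreal_plus)
  have "(\<integral>\<^sup>+Rs. ennreal (real (length (filter P Rs))) \<partial>pmf_mapM (\<lambda>_. D) (x # xs))
      = (\<integral>\<^sup>+y. (\<integral>\<^sup>+ys. indicator {R. P R} y + ennreal (real (length (filter P ys))) \<partial>pmf_mapM (\<lambda>_. D) xs) \<partial>D)"
    by (simp only: pmf_mapM.simps nn_integral_bind_pmf nn_integral_map_pmf e)
  also have "\<dots> = (\<integral>\<^sup>+y. indicator {R. P R} y + of_nat (length xs) * (\<integral>\<^sup>+R. indicator {R. P R} R \<partial>D) \<partial>D)"
    by (simp add: nn_integral_add Cons.IH)
  also have "\<dots> = (\<integral>\<^sup>+R. indicator {R. P R} R \<partial>D) + of_nat (length xs) * (\<integral>\<^sup>+R. indicator {R. P R} R \<partial>D)"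
    by (simp add: nn_integral_add)
  also have "\<dots> = of_nat (length (x # xs)) * (\<integral>\<^sup>+R. indicator {R. P R} R \<partial>D)"
    by (simp add: distrib_right)
  finally show ?case .
qed



lemma rr_collection_eq:
  fixes w0 :: "('v::finite) weights"
  assumes no_edges: "\<forall>u v. u \<noteq> v \<longrightarrow> w0 u v = 0"
    and self_nonneg: "\<forall>v. w0 v v \<ge> 0"
    and valid_ups: "\<forall>i < length ups. case ups ! i of (u, v, inc, \<Delta>) \<Rightarrow>
                       \<Delta> > 0 \<and> (\<not> inc \<longrightarrow> \<Delta> \<le> weights_at w0 ups i u v)"
  shows "t \<le> length ups \<Longrightarrow> rr_collection w0 ups M t = pmf_mapM (\<lambda>_. rr_sample (weights_at w0 ups t)) [0..<M]"
proof (induction t)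
  case 0
  then show ?case by (simp add: weights_at_def)
next
  case (Suc t)
  have lt: "t < length ups" using Suc.prems by simp
  obtain u v inc \<Delta> where e: "ups ! t = (u, v, inc, \<Delta>)" by (cases "ups ! t") auto
  have "case ups ! t of (u, v, inc, \<Delta>) \<Rightarrow> \<Delta> > 0 \<and> (\<not> inc \<longrightarrow> \<Delta> \<le> weights_at w0 ups t u v)"
    using valid_ups[rule_format, OF lt] .
  then have d: "\<Delta> > 0" and dec: "\<not> inc \<Longrightarrow> \<Delta> \<le> weights_at w0 ups t u v" using e by simp_all
  have nn: "\<And>a b. weights_at w0 ups t a b \<ge> 0"
    using weights_at_nonneg[OF self_nonneg no_edges valid_ups] lt by simp
  have "rr_collection w0 ups M (Suc t) = bind_pmf (pmf_mapM (\<lambda>_. rr_sample (weights_at w0 ups t)) [0..<M])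
          (pmf_mapM (rr_maintain (weights_at w0 ups t) (u, v, inc, \<Delta>)))"
    using Suc lt e by simp
  also have "\<dots> = pmf_mapM (\<lambda>_. rr_sample (apply_update (u, v, inc, \<Delta>) (weights_at w0 ups t))) [0..<M]"
    using rr_sample_maintain[of "weights_at w0 ups t" \<Delta> inc u v, OF nn d dec] by (simp add: pmf_mapM_bind)
  also have "\<dots> = pmf_mapM (\<lambda>_. rr_sample (weights_at w0 ups (Suc t))) [0..<M]"
    using weights_at_Suc[OF lt, of w0] e by simp
  finally show ?case .
qed

theorem theorem4p1:
  fixes w0 :: "('v::finite) weights" and ups :: "'v update list"
    and M t :: nat and S :: "'v set"
  assumes no_edges: "\<forall>u v. u \<noteq> v \<longrightarrow> w0 u v = 0"
    and self_nonneg: "\<forall>v. w0 v v \<ge> 0"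
    and valid_ups: "\<forall>i < length ups. case ups ! i of (u, v, inc, \<Delta>) \<Rightarrow>
                       \<Delta> > 0 \<and> (\<not> inc \<longrightarrow> \<Delta> \<le> weights_at w0 ups i u v)"
    and M_pos: "M > 0"
    and t_le: "t \<le> length ups"
  shows "measure_pmf.expectation (rr_collection w0 ups M t) (\<lambda>Rs. real CARD('v) * F_R Rs S)
         = influence (weights_at w0 ups t) S"
proof -
  define wt where "wt = weights_at w0 ups t"
  define coll where "coll = pmf_mapM (\<lambda>_. rr_sample wt) [0..<M]"
  define P where "P = (\<lambda>R::'v rr_state. set (fst R) \<inter> S \<noteq> {})"
  define X where "X = (\<Sum>r\<in>UNIV. Qr wt S r)"
  define n where "n = CARD('v)"
  have npos: "n > 0" unfolding n_def by simp
  have c: "rr_collection w0 ups M t = coll"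
    unfolding coll_def wt_def using rr_collection_eq[OF no_edges self_nonneg valid_ups t_le] .
  have "measure_pmf.expectation coll (\<lambda>Rs. real n * F_R Rs S)
      = enn2real (\<integral>\<^sup>+Rs. ennreal (real n * F_R Rs S) \<partial>coll)"
    by (rule integral_eq_nn_integral) (auto simp: F_R_def)
  also have "(\<integral>\<^sup>+Rs. ennreal (real n * F_R Rs S) \<partial>coll)
      = (\<integral>\<^sup>+Rs. ennreal (real n / real M) * ennreal (real (length (filter P Rs))) \<partial>coll)"
  proof (rule nn_integral_cong_AE, rule AE_pmfI)
    fix Rs assume "Rs \<in> set_pmf coll"
    then have "length Rs = M" unfolding coll_def using mapM_len by fastforce
    then show "ennreal (real n * F_R Rs S) = ennreal (real n / real M) * ennreal (real (length (filter P Rs)))"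
      by (simp add: F_R_def P_def ennreal_mult'[symmetric])
  qed
  also have "\<dots> = ennreal (real n / real M) * (of_nat M * (X / of_nat n))"
    unfolding coll_def
    by (simp add: nn_integral_cmult mapM_count P_def rr_hit_nn X_def n_def)
  also have "\<dots> = (ennreal (real n / real M) * of_nat M) * (X / of_nat n)"
    by (simp add: mult.assoc)
  also have "ennreal (real n / real M) * of_nat M = of_nat n"
    using M_pos by (simp add: ennreal_of_nat_eq_real_of_nat ennreal_mult''[symmetric])
  also have "of_nat n * (X / of_nat n) = X"
    using npos by (simp add: ennreal_times_divide mult.commute[of "of_nat n"] mult_divide_eq_ennreal)
  finally have "measure_pmf.expectation coll (\<lambda>Rs. real n * F_R Rs S) = enn2real X" .
  moreover have "influence wt S = enn2real X" unfolding X_def by (rule influence_nn)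
  ultimately show ?thesis unfolding c n_def wt_def by simp
qed


end
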